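(* Let $\mathcal{X},\mathcal{Y}$ be finite Markov chains and $C:{\bm X}\times{\bm Y}\to\mathbb{R}_+$ a cost function. Then for every $k\in\mathbb{N}$, $d^{(k)}_{\mathrm{WL}}(\mathcal{X},\mathcal{Y};C)=\lim_{\delta\to0}d^{\delta,(k)}_{\mathrm{WL}}(\mathcal{X},\mathcal{Y};C)$. Consequently, when $\mathcal{X},\mathcal{Y}$ are stationary, $d^{(\infty)}_{\mathrm{WL}}(\mathcal{X},\mathcal{Y};C)=\lim_{k\to\infty}\lim_{\delta\to0}d^{\delta,(k)}_{\mathrm{WL}}(\mathcal{X},\mathcal{Y};C)$.
   Context: A finite Markov chain $\mathcal{X}=({\bm X},m^{\bm X}_\bullet,\nu^{\bm X})$ consists of a finite set ${\bm X}$, a transition kernel $m^{\bm X}_\bullet:{\bm X}\to\mathcal{P}({\bm X})$ and an initial distribution $\nu^{\bm X}$; it is stationary if $\nu^{\bm X}$ is stationary for $m^{\bm X}_\bullet$. $\mathcal{C}(\alpha,\beta)$ denotes the set of couplings. A Markovian coupling between $\mathcal{X}$ and $\mathcal{Y}$ is a (possibly time-inhomogeneous) Markov chain $(X_t,Y_t)_{t\in\mathbb{N}}$ on ${\bm X}\times{\bm Y}$ with $\mathrm{law}(X_0,Y_0)\in\mathcal{C}(\nu^{\bm X},\nu^{\bm Y})$ and, for all $t,x,y$, the conditional law of $(X_{t+1},Y_{t+1})$ given $(X_t,Y_t)=(x,y)$ in $\mathcal{C}(m^{\bm X}_x,m^{\bm Y}_y)$; $\Pi(\mathcal{X},\mathcal{Y})$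 is the set of Markovian couplings. $d^{(k)}_{\mathrm{WL}}(\mathcal{X},\mathcal{Y};C)=\inf_{\Pi(\mathcal{X},\mathcal{Y})}\mathbb{E}\,C(X_k,Y_k)$ and, for stationary chains, $d^{(\infty)}_{\mathrm{WL}}=\sup_{k\in\mathbb{N}}d^{(k)}_{\mathrm{WL}}$. For $\delta\in[0,1]$ and $k\in\mathbb{N}$, $d^{\delta,(k)}_{\mathrm{WL}}(\mathcal{X},\mathcal{Y};C)=\inf_{\Pi(\mathcal{X},\mathcal{Y})}\mathbb{E}\big[\sum_{t=0}^{k-1}\delta(1-\delta)^tC(X_t,Y_t)+(1-\delta)^kC(X_k,Y_k)\big]$. *)

theory Defs
  imports "HOL-Probability.Probability"
begin

text \<open>A finite Markov chain is given by a finite type 'a (state space), a transition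
kernel m :: 'a => 'a pmf and an initial distribution nu :: 'a pmf.\<close>

definition stationary :: "('a \<Rightarrow> 'a pmf) \<Rightarrow> 'a pmf \<Rightarrow> bool" where
  "stationary m \<nu> \<longleftrightarrow> bind_pmf \<nu> m = \<nu>"

definition couplings :: "'a pmf \<Rightarrow> 'b pmf \<Rightarrow> ('a \<times> 'b) pmf set" where
  "couplings \<alpha> \<beta> = {\<pi>. map_pmf fst \<pi> = \<alpha> \<and> map_pmf snd \<pi> = \<beta>}"

definition markov_couplings ::
  "('a \<Rightarrow> 'a pmf) \<Rightarrow> 'a pmf \<Rightarrow> ('b \<Rightarrow> 'b pmf) \<Rightarrow> 'b pmf
   \<Rightarrow> (('a \<times> 'b) pmf \<times> (nat \<Rightarrow> 'a \<times> 'b \<Rightarrow> ('a \<times> 'b) pmf)) set" where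
  "markov_couplings mX \<nu>X mY \<nu>Y =
     {(\<pi>0, K). \<pi>0 \<in> couplings \<nu>X \<nu>Y \<and>
               (\<forall>t x y. K t (x, y) \<in> couplings (mX x) (mY y))}"

primrec coupling_law ::
  "('a \<times> 'b) pmf \<Rightarrow> (nat \<Rightarrow> 'a \<times> 'b \<Rightarrow> ('a \<times> 'b) pmf) \<Rightarrow> nat \<Rightarrow> ('a \<times> 'b) pmf" where
  "coupling_law \<pi>0 K 0 = \<pi>0"
| "coupling_law \<pi>0 K (Suc t) = bind_pmf (coupling_law \<pi>0 K t) (K t)"

definition exp_cost ::
  "('a \<Rightarrow> 'b \<Rightarrow> real) \<Rightarrow> ('a \<times> 'b) pmf \<Rightarrow> (nat \<Rightarrow> 'a \<times> 'b \<Rightarrow> ('a \<times> 'b) pmf) \<Rightarrow> nat \<Rightarrow> real" where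
  "exp_cost C \<pi>0 K t = measure_pmf.expectation (coupling_law \<pi>0 K t) (\<lambda>(x, y). C x y)"

definition dWL ::
  "nat \<Rightarrow> ('a \<Rightarrow> 'a pmf) \<Rightarrow> 'a pmf \<Rightarrow> ('b \<Rightarrow> 'b pmf) \<Rightarrow> 'b pmf \<Rightarrow> ('a \<Rightarrow> 'b \<Rightarrow> real) \<Rightarrow> real" where
  "dWL k mX \<nu>X mY \<nu>Y C =
     (INF p \<in> markov_couplings mX \<nu>X mY \<nu>Y. exp_cost C (fst p) (snd p) k)"

definition dWL_inf ::
  "('a \<Rightarrow> 'a pmf) \<Rightarrow> 'a pmf \<Rightarrow> ('b \<Rightarrow> 'b pmf) \<Rightarrow> 'b pmf \<Rightarrow> ('a \<Rightarrow> 'b \<Rightarrow> real) \<Rightarrow> real" where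
  "dWL_inf mX \<nu>X mY \<nu>Y C = (SUP k. dWL k mX \<nu>X mY \<nu>Y C)"

definition dWL_delta ::
  "real \<Rightarrow> nat \<Rightarrow> ('a \<Rightarrow> 'a pmf) \<Rightarrow> 'a pmf \<Rightarrow> ('b \<Rightarrow> 'b pmf) \<Rightarrow> 'b pmf \<Rightarrow> ('a \<Rightarrow> 'b \<Rightarrow> real) \<Rightarrow> real" where
  "dWL_delta \<delta> k mX \<nu>X mY \<nu>Y C =
     (INF p \<in> markov_couplings mX \<nu>X mY \<nu>Y.
        (\<Sum>t<k. \<delta> * (1 - \<delta>) ^ t * exp_cost C (fst p) (snd p) t)
        + (1 - \<delta>) ^ k * exp_cost C (fst p) (snd p) k)"

end

theory Submission
  imports Defs
begin

definition cbound :: "('a::finite \<Rightarrow> 'b::finite \<Rightarrow> real) \<Rightarrow> real" where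
  "cbound C = (\<Sum>z\<in>UNIV. case_prod C z)"

lemma exp_cost_nonneg:
  assumes "\<And>x y. C x y \<ge> 0"
  shows "0 \<le> exp_cost C \<pi>0 K t"
  unfolding exp_cost_def using assms
  by (intro Bochner_Integration.integral_nonneg) (auto split: prod.splits)

lemma exp_cost_le:
  fixes C :: "'a::finite \<Rightarrow> 'b::finite \<Rightarrow> real"
  assumes "\<And>x y. C x y \<ge> 0"
  shows "exp_cost C \<pi>0 K t \<le> cbound C"
proof -
  have le: "case_prod C z \<le> cbound C" for z
    unfolding cbound_def
    by (rule member_le_sum) (use assms in \<open>auto split: prod.splits\<close>)
  have le: "C a b \<le> cbound C" for a b using le[of "(a,b)"] by simp
  have "exp_cost C \<pi>0 K t \<le> measure_pmf.expectation (coupling_law \<pi>0 K t) (\<lambda>_. cbound C)"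
    unfolding exp_cost_def
    by (rule integral_mono) (auto intro: integrable_measure_pmf_finite le)
  also have "\<dots> = cbound C" by simp
  finally show ?thesis .
qed

lemma mc_nonempty: "(pair_pmf \<nu>X \<nu>Y, \<lambda>t (x,y). pair_pmf (mX x) (mY y)) \<in> markov_couplings mX \<nu>X mY \<nu>Y"
  unfolding markov_couplings_def couplings_def
  by (simp add: map_fst_pair_pmf map_snd_pair_pmf)

lemma INF_close:
  fixes f g :: "'p \<Rightarrow> real"
  assumes ne: "S \<noteq> {}" and f0: "\<And>p. p \<in> S \<Longrightarrow> 0 \<le> f p" and g0: "\<And>p. p \<in> S \<Longrightarrow> 0 \<le> g p"
    and close: "\<And>p. p \<in> S \<Longrightarrow> \<bar>f p - g p\<bar> \<le> e"
  shows "\<bar>(INF p\<in>S. f p) - (INF p\<in>S. g p)\<bar> \<le> e"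
proof -
  have bf: "bdd_below (f ` S)" using f0 by (intro bdd_belowI[where m=0]) auto
  have bg: "bdd_below (g ` S)" using g0 by (intro bdd_belowI[where m=0]) auto
  have "(INF p\<in>S. f p) - e \<le> (INF p\<in>S. g p)"
  proof -
    have "(INF p\<in>S. f p) - e \<le> g p" if "p \<in> S" for p
    proof -
      have "(INF p\<in>S. f p) \<le> f p" using bf that by (rule cINF_lower)
      then show ?thesis using close[OF that] by linarith
    qed
    then have "(INF p\<in>S. f p) - e \<le> (INF p\<in>S. g p)" using ne by (intro cINF_greatest) auto
    then show ?thesis .
  qed
  moreover have "(INF p\<in>S. g p) - e \<le> (INF p\<in>S. f p)"
  proof -
    have "(INF p\<in>S. g p) - e \<le> f p" if "p \<in> S" for p
    proof -
      have "(INF p\<in>S. g p) \<le> g p" using bg that by (rule cINF_lower)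
      then show ?thesis using close[OF that] by linarith
    qed
    then show ?thesis using ne by (intro cINF_greatest) auto
  qed
  ultimately show ?thesis by linarith
qed

lemma pow_bound:
  fixes \<delta> :: real
  assumes "0 \<le> \<delta>" "\<delta> \<le> 1"
  shows "\<bar>(1 - \<delta>) ^ k - 1\<bar> \<le> real k * \<delta>"
proof -
  have "1 + real k * (- \<delta>) \<le> (1 + (- \<delta>)) ^ k"
    by (rule Bernoulli_inequality) (use assms in auto)
  moreover have "(1 - \<delta>) ^ k \<le> 1" using assms by (intro power_le_one) auto
  ultimately show ?thesis by (simp add: abs_if)
qed


lemma term_close:
  fixes C :: "'a::finite \<Rightarrow> 'b::finite \<Rightarrow> real"
  assumes C0: "\<And>x y. C x y \<ge> 0" and d: "0 \<le> \<delta>" "\<delta> \<le> 1"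
  shows "\<bar>((\<Sum>t<k. \<delta> * (1 - \<delta>) ^ t * exp_cost C \<pi>0 K t)
        + (1 - \<delta>) ^ k * exp_cost C \<pi>0 K k) - exp_cost C \<pi>0 K k\<bar> \<le> 2 * real k * \<delta> * cbound C"
proof -
  let ?E = "exp_cost C \<pi>0 K"
  have s: "\<bar>\<Sum>t<k. \<delta> * (1 - \<delta>) ^ t * ?E t\<bar> \<le> real k * \<delta> * cbound C"
  proof -
    have "\<bar>\<Sum>t<k. \<delta> * (1 - \<delta>) ^ t * ?E t\<bar> \<le> (\<Sum>t<k. \<bar>\<delta> * (1 - \<delta>) ^ t * ?E t\<bar>)"
      by (rule sum_abs)
    also have "\<dots> \<le> (\<Sum>t<k. \<delta> * cbound C)"
    proof (rule sum_mono)
      fix t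
      have a: "0 \<le> (1 - \<delta>) ^ t" "(1 - \<delta>) ^ t \<le> 1" using d by (auto intro: power_le_one)
      have b: "0 \<le> ?E t" "?E t \<le> cbound C" using exp_cost_nonneg[where C=C, OF C0] exp_cost_le[where C=C, OF C0] by auto
      have "(1 - \<delta>) ^ t * ?E t \<le> 1 * cbound C" using a b by (intro mult_mono) auto
      then have "\<delta> * ((1 - \<delta>) ^ t * ?E t) \<le> \<delta> * cbound C" using d by (intro mult_left_mono) auto
      moreover have "0 \<le> \<delta> * (1 - \<delta>) ^ t * ?E t" using a b d by simp
      ultimately show "\<bar>\<delta> * (1 - \<delta>) ^ t * ?E t\<bar> \<le> \<delta> * cbound C" by (simp add: mult.assoc)
    qed
    also have "\<dots> = real k * \<delta> * cbound C" by simp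
    finally show ?thesis .
  qed
  have p: "\<bar>((1 - \<delta>) ^ k - 1) * ?E k\<bar> \<le> real k * \<delta> * cbound C"
  proof -
    have b: "0 \<le> ?E k" "?E k \<le> cbound C" using exp_cost_nonneg[where C=C, OF C0] exp_cost_le[where C=C, OF C0] by auto
    have "\<bar>((1 - \<delta>) ^ k - 1) * ?E k\<bar> = \<bar>(1 - \<delta>) ^ k - 1\<bar> * ?E k" using b by (simp add: abs_mult)
    also have "\<dots> \<le> (real k * \<delta>) * cbound C"
      using pow_bound[OF d, of k] b by (intro mult_mono) auto
    finally show ?thesis by simp
  qed
  have "((\<Sum>t<k. \<delta> * (1 - \<delta>) ^ t * ?E t) + (1 - \<delta>) ^ k * ?E k) - ?E k
      = (\<Sum>t<k. \<delta> * (1 - \<delta>) ^ t * ?E t) + ((1 - \<delta>) ^ k - 1) * ?E k"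
    by (simp add: algebra_simps)
  then show ?thesis using s p by linarith
qed

lemma dWL_delta_close:
  fixes C :: "'a::finite \<Rightarrow> 'b::finite \<Rightarrow> real"
  assumes C0: "\<And>x y. C x y \<ge> 0" and d: "0 \<le> \<delta>" "\<delta> \<le> 1"
  shows "\<bar>dWL_delta \<delta> k mX \<nu>X mY \<nu>Y C - dWL k mX \<nu>X mY \<nu>Y C\<bar> \<le> 2 * real k * \<delta> * cbound C"
  unfolding dWL_delta_def dWL_def
proof (rule INF_close)
  show "markov_couplings mX \<nu>X mY \<nu>Y \<noteq> {}" using mc_nonempty by blast
next
  fix p
  show "0 \<le> exp_cost C (fst p) (snd p) k" by (rule exp_cost_nonneg[where C=C, OF C0])
  have "0 \<le> \<delta> * (1 - \<delta>) ^ t * exp_cost C (fst p) (snd p) t" for t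
    using d exp_cost_nonneg[where C=C, OF C0] by simp
  then show "0 \<le> (\<Sum>t<k. \<delta> * (1 - \<delta>) ^ t * exp_cost C (fst p) (snd p) t)
        + (1 - \<delta>) ^ k * exp_cost C (fst p) (snd p) k"
    using d exp_cost_nonneg[where C=C, OF C0] by (intro add_nonneg_nonneg sum_nonneg) auto
  show "\<bar>(\<Sum>t<k. \<delta> * (1 - \<delta>) ^ t * exp_cost C (fst p) (snd p) t)
        + (1 - \<delta>) ^ k * exp_cost C (fst p) (snd p) k - exp_cost C (fst p) (snd p) k\<bar>
        \<le> 2 * real k * \<delta> * cbound C"
    by (rule term_close[where C=C, OF C0 d])
qed

lemma dWL_delta_lim:
  fixes C :: "'a::finite \<Rightarrow> 'b::finite \<Rightarrow> real"
  assumes C0: "\<And>x y. C x y \<ge> 0"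
  shows "((\<lambda>\<delta>. dWL_delta \<delta> k mX \<nu>X mY \<nu>Y C) \<longlongrightarrow> dWL k mX \<nu>X mY \<nu>Y C) (at_right 0)"
proof -
  let ?D = "\<lambda>\<delta>. dWL_delta \<delta> k mX \<nu>X mY \<nu>Y C" and ?d = "dWL k mX \<nu>X mY \<nu>Y C"
  have ev: "eventually (\<lambda>\<delta>. norm (?D \<delta> - ?d) \<le> 2 * real k * \<delta> * cbound C) (at_right (0::real))"
  proof -
    have "eventually (\<lambda>\<delta>::real. 0 < \<delta> \<and> \<delta> < 1) (at_right 0)"
      by (simp add: eventually_at_right_field) (intro exI[of _ 1], auto)
    then show ?thesis
      by eventually_elim (use dWL_delta_close[where C=C, OF C0] in auto)
  qed
  have "((\<lambda>\<delta>. 2 * real k * \<delta> * cbound C) \<longlongrightarrow> 2 * real k * 0 * cbound C) (at_right (0::real))"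
    by (intro tendsto_intros)
  then have "((\<lambda>\<delta>. 2 * real k * \<delta> * cbound C) \<longlongrightarrow> 0) (at_right (0::real))" by simp
  from Lim_null_comparison[OF ev this] have "((\<lambda>\<delta>. ?D \<delta> - ?d) \<longlongrightarrow> 0) (at_right 0)" .
  then show ?thesis by (simp add: LIM_zero_iff)
qed


lemma coupling_law_shift:
  "coupling_law (bind_pmf \<pi>0 (K 0)) (\<lambda>t. K (Suc t)) k = coupling_law \<pi>0 K (Suc k)"
  by (induction k) simp_all

lemma dWL_mono_step:
  fixes C :: "'a::finite \<Rightarrow> 'b::finite \<Rightarrow> real"
  assumes C0: "\<And>x y. C x y \<ge> 0" and st: "stationary mX \<nu>X" "stationary mY \<nu>Y"
  shows "dWL k mX \<nu>X mY \<nu>Y C \<le> dWL (Suc k) mX \<nu>X mY \<nu>Y C"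
  unfolding dWL_def
proof (rule cINF_greatest)
  show "markov_couplings mX \<nu>X mY \<nu>Y \<noteq> {}" using mc_nonempty by blast
next
  fix p assume p: "p \<in> markov_couplings mX \<nu>X mY \<nu>Y"
  obtain \<pi>0 K where pK: "p = (\<pi>0, K)" by (cases p)
  have c0: "\<pi>0 \<in> couplings \<nu>X \<nu>Y" and cK: "\<And>t x y. K t (x, y) \<in> couplings (mX x) (mY y)"
    using p pK unfolding markov_couplings_def by auto
  have f1: "map_pmf fst (bind_pmf \<pi>0 (K 0)) = \<nu>X"
  proof -
    have "map_pmf fst (bind_pmf \<pi>0 (K 0)) = bind_pmf \<pi>0 (\<lambda>z. map_pmf fst (K 0 z))"
      by (rule map_bind_pmf)
    also have "\<dots> = bind_pmf \<pi>0 (\<lambda>z. mX (fst z))"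
      using cK unfolding couplings_def by (intro bind_pmf_cong) (auto split: prod.splits)
    also have "\<dots> = bind_pmf (map_pmf fst \<pi>0) mX" by (simp add: bind_map_pmf)
    also have "\<dots> = \<nu>X" using c0 st unfolding couplings_def stationary_def by simp
    finally show ?thesis .
  qed
  have f2: "map_pmf snd (bind_pmf \<pi>0 (K 0)) = \<nu>Y"
  proof -
    have "map_pmf snd (bind_pmf \<pi>0 (K 0)) = bind_pmf \<pi>0 (\<lambda>z. map_pmf snd (K 0 z))"
      by (rule map_bind_pmf)
    also have "\<dots> = bind_pmf \<pi>0 (\<lambda>z. mY (snd z))"
      using cK unfolding couplings_def by (intro bind_pmf_cong) (auto split: prod.splits)
    also have "\<dots> = bind_pmf (map_pmf snd \<pi>0) mY" by (simp add: bind_map_pmf)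
    also have "\<dots> = \<nu>Y" using c0 st unfolding couplings_def stationary_def by simp
    finally show ?thesis .
  qed
  have q: "(bind_pmf \<pi>0 (K 0), \<lambda>t. K (Suc t)) \<in> markov_couplings mX \<nu>X mY \<nu>Y"
    using f1 f2 cK unfolding markov_couplings_def couplings_def by auto
  have bb: "bdd_below ((\<lambda>p. exp_cost C (fst p) (snd p) k) ` markov_couplings mX \<nu>X mY \<nu>Y)"
    by (intro bdd_belowI[where m=0]) (auto intro: exp_cost_nonneg[where C=C, OF C0])
  have "(INF p\<in>markov_couplings mX \<nu>X mY \<nu>Y. exp_cost C (fst p) (snd p) k)
        \<le> exp_cost C (bind_pmf \<pi>0 (K 0)) (\<lambda>t. K (Suc t)) k"
    using cINF_lower[OF bb q] by simp
  also have "\<dots> = exp_cost C (fst p) (snd p) (Suc k)"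
    unfolding exp_cost_def pK by (simp add: coupling_law_shift)
  finally show "(INF p\<in>markov_couplings mX \<nu>X mY \<nu>Y. exp_cost C (fst p) (snd p) k)
        \<le> exp_cost C (fst p) (snd p) (Suc k)" .
qed

lemma dWL_le_bound:
  fixes C :: "'a::finite \<Rightarrow> 'b::finite \<Rightarrow> real"
  assumes C0: "\<And>x y. C x y \<ge> 0"
  shows "dWL k mX \<nu>X mY \<nu>Y C \<le> cbound C"
proof -
  have bb: "bdd_below ((\<lambda>p. exp_cost C (fst p) (snd p) k) ` markov_couplings mX \<nu>X mY \<nu>Y)"
    by (intro bdd_belowI[where m=0]) (auto intro: exp_cost_nonneg[where C=C, OF C0])
  show ?thesis unfolding dWL_def
    using cINF_lower[OF bb mc_nonempty] exp_cost_le[where C=C, OF C0] by (meson order_trans)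
qed

theorem theorem15:
  fixes mX :: "'a::finite \<Rightarrow> 'a pmf" and \<nu>X :: "'a pmf"
    and mY :: "'b::finite \<Rightarrow> 'b pmf" and \<nu>Y :: "'b pmf"
    and C :: "'a \<Rightarrow> 'b \<Rightarrow> real"
  assumes C_nonneg: "\<And>x y. C x y \<ge> 0"
  shows "(\<forall>k. ((\<lambda>\<delta>. dWL_delta \<delta> k mX \<nu>X mY \<nu>Y C) \<longlongrightarrow> dWL k mX \<nu>X mY \<nu>Y C) (at_right 0))
       \<and> (stationary mX \<nu>X \<and> stationary mY \<nu>Y \<longrightarrow>
           (\<lambda>k. Lim (at_right 0) (\<lambda>\<delta>. dWL_delta \<delta> k mX \<nu>X mY \<nu>Y C))
             \<longlonglongrightarrow> dWL_inf mX \<nu>X mY \<nu>Y C)"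
proof (intro conjI allI impI)
  fix k
  show "((\<lambda>\<delta>. dWL_delta \<delta> k mX \<nu>X mY \<nu>Y C) \<longlongrightarrow> dWL k mX \<nu>X mY \<nu>Y C) (at_right 0)"
    by (rule dWL_delta_lim[where C=C, OF C_nonneg])
next
  assume st: "stationary mX \<nu>X \<and> stationary mY \<nu>Y"
  have L: "Lim (at_right 0) (\<lambda>\<delta>. dWL_delta \<delta> k mX \<nu>X mY \<nu>Y C) = dWL k mX \<nu>X mY \<nu>Y C" for k
    by (rule tendsto_Lim) (simp_all add: dWL_delta_lim[where C=C, OF C_nonneg])
  have inc: "incseq (\<lambda>k. dWL k mX \<nu>X mY \<nu>Y C)"
    by (rule incseq_SucI) (use dWL_mono_step[where C=C, OF C_nonneg] st in auto)
  have bd: "bdd_above (range (\<lambda>k. dWL k mX \<nu>X mY \<nu>Y C))"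
    by (intro bdd_aboveI[where M="cbound C"]) (auto intro: dWL_le_bound[where C=C, OF C_nonneg])
  show "(\<lambda>k. Lim (at_right 0) (\<lambda>\<delta>. dWL_delta \<delta> k mX \<nu>X mY \<nu>Y C)) \<longlonglongrightarrow> dWL_inf mX \<nu>X mY \<nu>Y C"
    unfolding L dWL_inf_def by (rule LIMSEQ_incseq_SUP[OF bd inc])
qed

end
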